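(* For every graph $G=(V,E)$, the graph $G'$ defined below is chordal bipartite.
   Context: $G'$ has vertices $x_v,y_v$ for each $v\in V$ and $p_{e,u},q_{e,u},p_{e,v},q_{e,v}$ for each edge $e=uv\in E$. Its edges are: $x_vy_u$ for all $u,v\in V$ (including $u=v$); and for each $e=uv\in E$, the edges $p_{e,u}q_{e,u}$, $p_{e,v}q_{e,v}$, $x_up_{e,u}$, $y_vq_{e,u}$, $x_vp_{e,v}$, $y_uq_{e,v}$. A graph is chordal bipartite if it is bipartite and every cycle of length at least $6$ has a chord. *)

theory Defs
  imports Main
begin

definition simple_graph :: "'a set \<Rightarrow> 'a set set \<Rightarrow> bool" where
  "simple_graph V E \<longleftrightarrow> (\<forall>e\<in>E. card e = 2 \<and> e \<subseteq> V)"

definition adj :: "'a set set \<Rightarrow> 'a \<Rightarrow> 'a \<Rightarrow> bool" where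
  "adj E u v \<longleftrightarrow> {u, v} \<in> E"

definition bipartite :: "'a set \<Rightarrow> 'a set set \<Rightarrow> bool" where
  "bipartite V E \<longleftrightarrow> (\<exists>c :: 'a \<Rightarrow> bool. \<forall>u\<in>V. \<forall>v\<in>V. adj E u v \<longrightarrow> c u \<noteq> c v)"

definition is_cycle :: "'a set \<Rightarrow> 'a set set \<Rightarrow> 'a list \<Rightarrow> bool" where
  "is_cycle V E vs \<longleftrightarrow> length vs \<ge> 3 \<and> distinct vs \<and> set vs \<subseteq> V \<and>
     (\<forall>i < length vs. adj E (vs ! i) (vs ! ((i + 1) mod length vs)))"

definition has_chord :: "'a set set \<Rightarrow> 'a list \<Rightarrow> bool" where
  "has_chord E vs \<longleftrightarrow> (\<exists>i < length vs. \<exists>j < length vs. i \<noteq> j \<and>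
     j \<noteq> (i + 1) mod length vs \<and> i \<noteq> (j + 1) mod length vs \<and> adj E (vs ! i) (vs ! j))"

definition chordal_bipartite :: "'a set \<Rightarrow> 'a set set \<Rightarrow> bool" where
  "chordal_bipartite V E \<longleftrightarrow> bipartite V E \<and>
     (\<forall>vs. is_cycle V E vs \<and> length vs \<ge> 6 \<longrightarrow> has_chord E vs)"

datatype 'a gvert = X 'a | Y 'a | P "'a set" 'a | Q "'a set" 'a

definition G'_verts :: "'a set \<Rightarrow> 'a set set \<Rightarrow> 'a gvert set" where
  "G'_verts V E = X ` V \<union> Y ` V \<union> {P e u | e u. e \<in> E \<and> u \<in> e} \<union> {Q e u | e u. e \<in> E \<and> u \<in> e}"

definition G'_edges :: "'a set \<Rightarrow> 'a set set \<Rightarrow> 'a gvert set set" where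
  "G'_edges V E =
     {{X v, Y u} | u v. u \<in> V \<and> v \<in> V}
   \<union> {{P e u, Q e u} | e u. e \<in> E \<and> u \<in> e}
   \<union> {{X u, P e u} | e u. e \<in> E \<and> u \<in> e}
   \<union> {{Y w, Q e u} | e u w. e \<in> E \<and> u \<in> e \<and> w \<in> e \<and> w \<noteq> u}"

end

theory Submission
  imports Defs
begin

lemma adj_sym: "adj E a b = adj E b a"
  by (simp add: adj_def insert_commute)

lemma adj_symI: "adj E a b \<Longrightarrow> adj E b a"
  by (simp add: adj_def insert_commute)

lemma adjP: "adj (G'_edges V E) (P e u) z \<Longrightarrow> z = X u \<or> z = Q e u"
  unfolding adj_def G'_edges_def by (auto simp: doubleton_eq_iff)

lemma adjQ: "adj (G'_edges V E) (Q e u) z \<Longrightarrow> z = P e u \<or> (\<exists>w. z = Y w \<and> w \<in> e \<and> w \<noteq> u)"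
  unfolding adj_def G'_edges_def by (auto simp: doubleton_eq_iff)

lemma adjX: "adj (G'_edges V E) (X a) z \<Longrightarrow> (\<exists>b. z = Y b) \<or> (\<exists>e. z = P e a)"
  unfolding adj_def G'_edges_def by (auto simp: doubleton_eq_iff)

lemma adjY: "adj (G'_edges V E) (Y b) z \<Longrightarrow> (\<exists>a. z = X a) \<or> (\<exists>e u. z = Q e u)"
  unfolding adj_def G'_edges_def by (auto simp: doubleton_eq_iff)

lemma adjXY: "a \<in> V \<Longrightarrow> b \<in> V \<Longrightarrow> adj (G'_edges V E) (X a) (Y b)"
  unfolding adj_def G'_edges_def by blast

lemma vertX: "X a \<in> G'_verts V E \<Longrightarrow> a \<in> V"
  unfolding G'_verts_def by auto

lemma vertY: "Y a \<in> G'_verts V E \<Longrightarrow> a \<in> V"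
  unfolding G'_verts_def by auto

lemma bip: "bipartite (G'_verts V E) (G'_edges V E)"
  unfolding bipartite_def
  apply (rule exI[of _ "\<lambda>v. case v of X _ \<Rightarrow> True | Q _ _ \<Rightarrow> True | _ \<Rightarrow> False"])
  unfolding adj_def G'_edges_def by (auto simp: doubleton_eq_iff)

lemma modd: "(a::nat) mod n = (a + d) mod n \<Longrightarrow> 0 < d \<Longrightarrow> d < n \<Longrightarrow> False"
proof -
  assume h: "a mod n = (a + d) mod n" "0 < d" "d < n"
  then have "n dvd d" using mod_eq_dvd_iff_nat[of a "a+d" n] by simp
  then show False using h by (simp add: nat_dvd_not_less)
qed

lemma vertQ: "Q e u \<in> G'_verts V E \<Longrightarrow> e \<in> E \<and> u \<in> e"
  unfolding G'_verts_def by auto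

lemma chord_lemma:
  assumes sg: "simple_graph V E"
    and cyc: "is_cycle (G'_verts V E) (G'_edges V E) vs" and len: "length vs \<ge> 6"
  shows "has_chord (G'_edges V E) vs"
proof -
  define G where "G = G'_edges V E"
  define n where "n = length vs"
  define nb where "nb k = vs ! (k mod n)" for k
  have n6: "n \<ge> 6" using len n_def by simp
  have A: "adj G (nb k) (nb (Suc k))" for k
  proof -
    have "k mod n < n" using n6 by simp
    then have "adj G (vs ! (k mod n)) (vs ! ((k mod n + 1) mod n))"
      using cyc unfolding is_cycle_def G_def n_def by blast
    then show ?thesis unfolding nb_def by (simp add: mod_Suc_eq)
  qed
  have D: "nb k = nb j \<Longrightarrow> k mod n = j mod n" for k j
  proof -
    assume h: "nb k = nb j"
    have "k mod n < n" "j mod n < n" using n6 by auto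
    moreover have "distinct vs" using cyc unfolding is_cycle_def by simp
    ultimately show ?thesis using h unfolding nb_def n_def by (simp add: nth_eq_iff_index_eq)
  qed
  have ND: "nb a \<noteq> nb (a + d)" if "0 < d" "d < n" for a d
    using D modd that by blast
  have Vt: "nb k \<in> G'_verts V E" for k
  proof -
    have "k mod n < n" using n6 by simp
    then show ?thesis using cyc unfolding nb_def is_cycle_def n_def by auto
  qed
  have per: "nb (i + n) = nb i" for i unfolding nb_def by simp
  have ND2: "nb a \<noteq> nb (a + 2)" for a using ND[of 2 a] n6 by simp
  have key: "\<exists>k a b. (nb k = X a \<and> nb (k+3) = Y b) \<or> (nb k = Y b \<and> nb (k+3) = X a)"
  proof (cases "\<exists>i e u. nb i = P e u")
    case True
    then obtain i e u where Pi0: "nb i = P e u" by blast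
    define j where "j = i + n"
    have Pj: "nb j = P e u" using Pi0 per j_def by simp
    have j6: "j \<ge> 6" using n6 j_def by simp
    have s1: "Suc (j - 1) = j" "Suc (j - 2) = j - 1" using j6 by auto
    have a1: "adj G (P e u) (nb (j+1))" using A[of j] Pj by simp
    have a2: "adj G (nb (j-1)) (P e u)" using A[of "j-1"] Pj s1 by simp
    have n1: "nb (j+1) = X u \<or> nb (j+1) = Q e u" using adjP[OF a1[unfolded G_def]] .
    have n2: "nb (j-1) = X u \<or> nb (j-1) = Q e u" using adjP[OF adj_symI[OF a2[unfolded G_def]]] .
    have "j - 1 + 2 = j + 1" using j6 by simp
    then have dd: "nb (j+1) \<noteq> nb (j-1)"
      using ND2[of "j-1"] by metis
    have d2: "nb (j+2) \<noteq> nb j" using ND2[of j] by metis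
    have "j - 2 + 2 = j" using j6 by simp
    then have d3: "nb (j-2) \<noteq> nb j" using ND2[of "j-2"] by metis
    show ?thesis
    proof (cases "nb (j+1) = Q e u")
      case True
      then have X1: "nb (j-1) = X u" using n2 dd by auto
      have "adj G (Q e u) (nb (j+2))" using A[of "j+1"] True by simp
      then obtain w where w: "nb (j+2) = Y w" using adjQ[of V E e u "nb (j+2)"] d2 Pj unfolding G_def by auto
      have "j - 1 + 3 = j + 2" using j6 by simp
      then show ?thesis using X1 w by (intro exI[of _ "j-1"]) auto
    next
      case False
      then have X1: "nb (j+1) = X u" and Q1: "nb (j-1) = Q e u" using n1 n2 dd by auto
      have "adj G (nb (j-2)) (Q e u)" using A[of "j-2"] Q1 s1 by simp
      then have "adj G (Q e u) (nb (j-2))" by (rule adj_symI)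
      then obtain w where w: "nb (j-2) = Y w" using adjQ[of V E e u "nb (j-2)"] d3 Pj unfolding G_def by auto
      have "j - 2 + 3 = j + 1" using j6 by simp
      then show ?thesis using X1 w by (intro exI[of _ "j-2"]) auto
    qed
  next
    case False
    have noQ: "nb i \<noteq> Q e u" for i e u
    proof
      assume Qi0: "nb i = Q e u"
      define j where "j = i + n"
      have Qj: "nb j = Q e u" using Qi0 per j_def by simp
      have j6: "j \<ge> 6" using n6 j_def by simp
      have s1: "Suc (j - 1) = j" using j6 by auto
      have a1: "adj G (Q e u) (nb (j+1))" using A[of j] Qj by simp
      have a2: "adj G (Q e u) (nb (j-1))" using A[of "j-1"] Qj s1 adj_symI by metis
      obtain w1 where w1: "nb (j+1) = Y w1" "w1 \<in> e" "w1 \<noteq> u" using adjQ[OF a1[unfolded G_def]] False by blast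
      obtain w2 where w2: "nb (j-1) = Y w2" "w2 \<in> e" "w2 \<noteq> u" using adjQ[OF a2[unfolded G_def]] False by blast
      have eu: "e \<in> E" "u \<in> e" using vertQ Vt[of j] Qj by metis+
      then have "card e = 2" using sg unfolding simple_graph_def by blast
      then obtain p q where "p \<noteq> q" "e = {p, q}" by (meson card_2_iff)
      then have "w1 = w2" using w1 w2 eu by auto
      moreover have "j - 1 + 2 = j + 1" using j6 by simp
      then have "nb (j+1) \<noteq> nb (j-1)"
        using ND2[of "j-1"] by metis
      ultimately show False using w1 w2 by simp
    qed
    have XY: "(\<exists>a. nb k = X a) \<or> (\<exists>a. nb k = Y a)" for k
      using False noQ by (cases "nb k") auto
    have nX: "\<exists>b. nb (Suc k) = Y b" if "nb k = X a" for k a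
      using adjX[of V E a "nb (Suc k)"] A[of k] that False unfolding G_def by auto
    have nY: "\<exists>b. nb (Suc k) = X b" if "nb k = Y a" for k a
      using adjY[of V E a "nb (Suc k)"] A[of k] that noQ unfolding G_def by auto
    show ?thesis
    proof (cases "\<exists>a. nb 0 = X a")
      case True
      then obtain a where "nb 0 = X a" by blast
      then obtain b1 where "nb (Suc 0) = Y b1" using nX by blast
      then obtain b2 where "nb (Suc (Suc 0)) = X b2" using nY by blast
      then obtain b where "nb (Suc (Suc (Suc 0))) = Y b" using nX by blast
      then have "nb (0+3) = Y b" by (simp add: numeral_3_eq_3)
      then show ?thesis using \<open>nb 0 = X a\<close> by blast
    next
      case False
      then obtain a where "nb 0 = Y a" using XY by blast
      then obtain b1 where "nb (Suc 0) = X b1" using nY by blast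
      then obtain b2 where "nb (Suc (Suc 0)) = Y b2" using nX by blast
      then obtain b where "nb (Suc (Suc (Suc 0))) = X b" using nY by blast
      then have "nb (0+3) = X b" by (simp add: numeral_3_eq_3)
      then show ?thesis using \<open>nb 0 = Y a\<close> by blast
    qed
  qed
  then obtain k a b where kab: "(nb k = X a \<and> nb (k+3) = Y b) \<or> (nb k = Y b \<and> nb (k+3) = X a)" by blast
  have aV: "a \<in> V" and bV: "b \<in> V" using kab Vt[of k] Vt[of "k+3"] vertX vertY by metis+
  have adjk: "adj G (nb k) (nb (k+3))" using kab adjXY[OF aV bV] adj_sym unfolding G_def by metis
  define i where "i = k mod n"
  define j where "j = (k+3) mod n"
  have ij: "i < n" "j < n" using n6 by (auto simp: i_def j_def)
  have c1: "i \<noteq> j" using modd[of k n 3] n6 unfolding i_def j_def by auto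
  have c2: "j \<noteq> (i+1) mod n"
  proof
    assume "j = (i+1) mod n"
    then have "(k+3) mod n = (k mod n + 1) mod n" unfolding i_def j_def by simp
    also have "\<dots> = (k+1) mod n" by (simp add: mod_Suc_eq)
    finally have h: "(k+3) mod n = (k+1) mod n" .
    have e: "k+1+2 = k+3" by simp
    have "(k+1) mod n = (k+1+2) mod n" unfolding e using h by (rule sym)
    then show False using modd[of "k+1" n 2] n6 by simp
  qed
  have c3: "i \<noteq> (j+1) mod n"
  proof
    assume "i = (j+1) mod n"
    then have "k mod n = ((k+3) mod n + 1) mod n" unfolding i_def j_def by simp
    also have "\<dots> = (k+4) mod n" by (simp add: mod_Suc_eq add.commute)
    finally have "k mod n = (k+4) mod n" .
    then show False using modd[of k n 4] n6 by simp
  qed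
  have "adj G (vs ! i) (vs ! j)" using adjk unfolding nb_def i_def j_def .
  then show ?thesis unfolding has_chord_def
    using ij c1 c2 c3 unfolding n_def[symmetric] G_def[symmetric] by blast
qed

theorem lemma11:
  fixes V :: "'a set" and E :: "'a set set"
  assumes "simple_graph V E"
  shows "chordal_bipartite (G'_verts V E) (G'_edges V E)"
  unfolding chordal_bipartite_def using bip chord_lemma[OF assms] by blast

end
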